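(* Let $n=2m+2$ with $m\ge0$, let $a,b,c,d\in\mathbb{C}$, and suppose $T_n$ (degree $n$) and $U_{n-2}$ (degree at most $n-2$) satisfy $T_n^2-HU_{n-2}^2=1$ with $$T_n(z)=1-\frac{2(z-c)(z-d)\prod_{j=1}^m(z-x_j)^2}{(a-c)(a-d)\prod_{j=1}^m(a-x_j)^2}=-1+\frac{2(z-a)(z-b)\prod_{j=1}^m(z-y_j)^2}{(c-a)(c-b)\prod_{j=1}^m(c-y_j)^2}$$ for some $x_1,\dots,x_m,y_1,\dots,y_m\in\mathbb{C}$. Put $s_k:=\tfrac12\bigl(a^k+b^k+c^k-d^k\bigr)$, $k=1,\dots,2m+1$, and form $F_k,\mathbf F,\mathbf F_i$ with $\nu=m+1$, $\mu=m$. Then $\det\mathbf F\ne0$ and $y_1,\dots,y_m$ (with multiplicity) are exactly the zeros of $$y^{m}\det\mathbf F+y^{m-1}\det\mathbf F_1+\dots+y\det\mathbf F_{m-1}+\det\mathbf F_m.$$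
   Context: $H(z)=(z-a)(z-b)(z-c)(z-d)$. Given complex numbers $s_1,s_2,\dots$: $F_0:=1$, $F_k:=0$ for $k<0$, and for $k\ge1$, $F_k:=\frac{(-1)^k}{k!}\det M_k$ where $M_k$ is the $k\times k$ matrix with entry $s_{i-j+1}$ for $j\le i$, entry $i$ at position $(i,i+1)$, and $0$ elsewhere. For integers $\nu\ge0,\mu\ge0$, $\mathbf F$ is the $\mu\times\mu$ matrix with $(i,j)$ entry $F_{\nu+i-j}$, and $\mathbf F_i$ ($1\le i\le\mu$) is $\mathbf F$ with its $i$-th column replaced by $(-F_{\nu+1},\dots,-F_{\nu+\mu})^T$. Convention: if $\mu=0$, $\det\mathbf F:=1$. *)

theory Defs
  imports "Jordan_Normal_Form.Determinant" "HOL-Computational_Algebra.Polynomial"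
begin

definition Mmat :: "(nat \<Rightarrow> complex) \<Rightarrow> nat \<Rightarrow> complex mat" where
  "Mmat s k = mat k k (\<lambda>(r, c). let i = r + 1; j = c + 1 in
      if j \<le> i then s (i - j + 1) else if j = i + 1 then of_nat i else 0)"

definition Fseq :: "(nat \<Rightarrow> complex) \<Rightarrow> int \<Rightarrow> complex" where
  "Fseq s k = (if k < 0 then 0 else if k = 0 then 1
      else (-1) ^ nat k / of_nat (fact (nat k)) * det (Mmat s (nat k)))"

definition FFmat :: "(nat \<Rightarrow> complex) \<Rightarrow> nat \<Rightarrow> nat \<Rightarrow> complex mat" where
  "FFmat s \<nu> \<mu> = mat \<mu> \<mu> (\<lambda>(r, c). Fseq s (int \<nu> + int r - int c))"

definition FFimat :: "(nat \<Rightarrow> complex) \<Rightarrow> nat \<Rightarrow> nat \<Rightarrow> nat \<Rightarrow> complex mat" where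
  "FFimat s \<nu> \<mu> i = mat \<mu> \<mu> (\<lambda>(r, c).
      if c + 1 = i then - Fseq s (int \<nu> + int r + 1) else Fseq s (int \<nu> + int r - int c))"

definition Hpoly :: "complex \<Rightarrow> complex \<Rightarrow> complex \<Rightarrow> complex \<Rightarrow> complex poly" where
  "Hpoly a b c d = [:-a, 1:] * [:-b, 1:] * [:-c, 1:] * [:-d, 1:]"

end

theory Submission
  imports Defs "HOL-Computational_Algebra.Polynomial_FPS"
begin


definition ent :: "(nat \<Rightarrow> complex) \<Rightarrow> nat \<Rightarrow> nat \<Rightarrow> complex" where
  "ent s r c = (if c \<le> r then s (r - c + 1) else if c = r + 1 then of_nat (r+1) else 0)"

lemma Mmat_ent: "Mmat s k = mat k k (\<lambda>(r,c). ent s r c)"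
  unfolding Mmat_def ent_def
  by (rule eq_matI) (auto simp: Let_def)

definition Dm :: "(nat \<Rightarrow> complex) \<Rightarrow> nat \<Rightarrow> (nat \<Rightarrow> complex) \<Rightarrow> complex mat" where
  "Dm s k w = mat k k (\<lambda>(r,c). if Suc r = k then w c else ent s r c)"

lemma Dm_M: "k \<ge> 1 \<Longrightarrow> Mmat s k = Dm s k (\<lambda>c. s (k - c))"
  unfolding Mmat_ent Dm_def
  by (rule eq_matI) (auto simp: ent_def Suc_diff_le)

lemma Dm_rec:
  assumes k: "k \<ge> 1"
  shows "det (Dm s (Suc k) w) = w k * det (Mmat s k) - of_nat k * det (Dm s k w)"
proof -
  let ?A = "Dm s (Suc k) w"
  have A: "?A \<in> carrier_mat (Suc k) (Suc k)" by (simp add: Dm_def)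
  have "det ?A = (\<Sum>i<Suc k. ?A $$ (i,k) * cofactor ?A i k)"
    by (rule laplace_expansion_column[OF A]) simp
  also have "\<dots> = (\<Sum>i\<in>{k-1,k}. ?A $$ (i,k) * cofactor ?A i k)"
  proof (rule sum.mono_neutral_right)
    show "\<forall>i\<in>{..<Suc k} - {k - 1, k}. ?A $$ (i, k) * cofactor ?A i k = 0"
      by (auto simp: Dm_def ent_def)
  qed auto
  also have "\<dots> = ?A $$ (k-1,k) * cofactor ?A (k-1) k + ?A $$ (k,k) * cofactor ?A k k"
    using k by simp
  also have "?A $$ (k-1,k) = of_nat k" using k by (auto simp: Dm_def ent_def)
  also have "?A $$ (k,k) = w k" by (simp add: Dm_def)
  also have "cofactor ?A k k = det (Mmat s k)"
  proof -
    have "mat_delete ?A k k = Mmat s k"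
      unfolding Mmat_ent Dm_def mat_delete_def
      by (rule eq_matI) auto
    then show ?thesis by (simp add: cofactor_def)
  qed
  also have "cofactor ?A (k-1) k = - det (Dm s k w)"
  proof -
    have "mat_delete ?A (k-1) k = Dm s k w"
      unfolding Dm_def mat_delete_def
      by (rule eq_matI) (auto simp: ent_def)
    moreover have "(-1::complex)^(k - 1 + k) = -1"
    proof -
      have "k - 1 + k = Suc (2*(k-1))" using k by simp
      then show ?thesis by simp
    qed
    ultimately show ?thesis by (simp add: cofactor_def)
  qed
  finally show ?thesis by simp
qed

definition Fn :: "(nat \<Rightarrow> complex) \<Rightarrow> nat \<Rightarrow> complex" where
  "Fn s k = Fseq s (int k)"

lemma Fn_det: "det (Mmat s k) = (-1)^k * fact k * Fn s k"
proof (cases "k = 0")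
  case True
  then show ?thesis by (simp add: Fn_def Fseq_def Mmat_def det_def)
next
  case False
  then show ?thesis by (simp add: Fn_def Fseq_def)
qed

lemma Dm_closed:
  assumes "k \<ge> 1"
  shows "det (Dm s k w) = (-1)^(k+1) * fact (k-1) * (\<Sum>j<k. w j * Fn s j)"
  using assms
proof (induction k rule: dec_induct)
  case base
  have "det (Dm s 1 w) = w 0"
    by (simp add: Dm_def det_def)
  then show ?case by (simp add: Fn_def Fseq_def)
next
  case (step k)
  have "det (Dm s (Suc k) w) = w k * det (Mmat s k) - of_nat k * det (Dm s k w)"
    by (rule Dm_rec[OF step(1)])
  also have "\<dots> = (-1)^(Suc k+1) * fact k * (\<Sum>j<Suc k. w j * Fn s j)"
    unfolding step(3) Fn_det
    using step(1)
    by (simp add: algebra_simps fact_reduce[of k])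
  finally show ?case by simp
qed


no_notation vec_index (infixl "$" 100)
notation fps_nth (infixl "$" 75)

lemma Fn_rec:
  assumes "k \<ge> 1"
  shows "of_nat k * Fn s k = - (\<Sum>j<k. s (k - j) * Fn s j)"
proof -
  have M: "Mmat s k = Dm s k (\<lambda>c. s (k - c))" by (rule Dm_M[OF assms])
  have "Fn s k = (-1)^k / fact k * det (Mmat s k)"
    using assms by (simp add: Fn_def Fseq_def)
  also have "\<dots> = (-1)^k / fact k * ((-1)^(k+1) * fact (k-1) * (\<Sum>j<k. s (k - j) * Fn s j))"
    unfolding M Dm_closed[OF assms] ..
  also have "\<dots> = - (fact (k-1) / fact k) * (\<Sum>j<k. s (k - j) * Fn s j)"
    by (simp add: power_add)
  also have "fact (k-1) / fact k = (1 / of_nat k :: complex)"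
    using assms by (cases k) auto
  finally show ?thesis using assms by simp
qed

definition Gf :: "(nat \<Rightarrow> complex) \<Rightarrow> complex fps" where
  "Gf s = Abs_fps (Fn s)"

definition Sf :: "(nat \<Rightarrow> complex) \<Rightarrow> complex fps" where
  "Sf s = Abs_fps (\<lambda>n. s (n+1))"

lemma G_deriv: "fps_deriv (Gf s) = - (Sf s * Gf s)"
proof (rule fps_ext)
  fix n
  have "fps_deriv (Gf s) $ n = of_nat (Suc n) * Fn s (Suc n)" by (simp add: Gf_def)
  also have "\<dots> = - (\<Sum>j<Suc n. s (Suc n - j) * Fn s j)" by (rule Fn_rec) simp
  also have "(\<Sum>j<Suc n. s (Suc n - j) * Fn s j) = (\<Sum>i=0..n. s (i+1) * Fn s (n - i))"
  proof -
    have "(\<Sum>j<Suc n. s (Suc n - j) * Fn s j) = (\<Sum>j=0..n. s (Suc n - j) * Fn s j)"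
      by (rule sum.cong) auto
    also have "\<dots> = (\<Sum>i=0..n. s (Suc n - (n - i)) * Fn s (n - i))"
      by (rule sum.reindex_bij_witness[of _ "\<lambda>i. n - i" "\<lambda>i. n - i"]) auto
    also have "\<dots> = (\<Sum>i=0..n. s (i+1) * Fn s (n - i))"
      by (rule sum.cong) auto
    finally show ?thesis .
  qed
  also have "\<dots> = (Sf s * Gf s) $ n" by (simp add: fps_mult_nth Sf_def Gf_def)
  finally show "fps_deriv (Gf s) $ n = (- (Sf s * Gf s)) $ n" by simp
qed

definition geo :: "complex \<Rightarrow> complex fps" where
  "geo a = Abs_fps (\<lambda>n. a^(n+1))"

abbreviation lin :: "complex \<Rightarrow> complex fps" where
  "lin a \<equiv> 1 - fps_const a * fps_X"

lemma geo_eq: "lin a * geo a = fps_const a"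
proof (rule fps_ext)
  fix n
  show "(lin a * geo a) $ n = fps_const a $ n"
  proof -
    have e: "lin a * geo a = geo a - fps_const a * (fps_X * geo a)"
      by (simp add: algebra_simps)
    show ?thesis unfolding e
      by (cases n) (simp_all add: geo_def fps_X_mult_nth)
  qed
qed

lemma ring1: "(ga+gb+gc-gd)*(la*lb*lc)*ld = (la*ga)*lb*lc*ld + (lb*gb)*la*lc*ld + (lc*gc)*la*lb*ld - (ld*gd)*la*lb*(lc::'a::comm_ring_1)"
  by (simp add: algebra_simps)

lemma ring2: "A*(1-B*X)*(1-C*X)*(1-D*X) + B*(1-A*X)*(1-C*X)*(1-D*X) + C*(1-A*X)*(1-B*X)*(1-D*X) - D*(1-A*X)*(1-B*X)*(1-C*X)
  = - (((-A)*(1-B*X) + (1-A*X)*(-B))*(1-C*X) + ((1-A*X)*(1-B*X))*(-C)) * (1-D*X) + ((1-A*X)*(1-B*X)*(1-C*X)) * (-(D::'a::comm_ring_1))"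
  by (simp add: algebra_simps)

lemma key_id:
  fixes a b c d :: complex
  defines "s \<equiv> (\<lambda>k::nat. (a ^ k + b ^ k + c ^ k - d ^ k) / 2)"
  shows "2 * Sf s * (lin a * lin b * lin c) * lin d
     = - fps_deriv (lin a * lin b * lin c) * lin d + (lin a * lin b * lin c) * fps_deriv (lin d)"
proof -
  have S: "2 * Sf s = geo a + geo b + geo c - geo d"
    by (rule fps_ext) (simp add: s_def Sf_def geo_def numeral_fps_const)
  have "2 * Sf s * (lin a * lin b * lin c) * lin d
      = (lin a * geo a) * lin b * lin c * lin d + (lin b * geo b) * lin a * lin c * lin d
        + (lin c * geo c) * lin a * lin b * lin d - (lin d * geo d) * lin a * lin b * lin c"
    unfolding S by (rule ring1)
  also have "\<dots> = fps_const a * lin b * lin c * lin d + fps_const b * lin a * lin c * lin d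
        + fps_const c * lin a * lin b * lin d - fps_const d * lin a * lin b * lin c"
    unfolding geo_eq ..
  also have "\<dots> = - fps_deriv (lin a * lin b * lin c) * lin d + (lin a * lin b * lin c) * fps_deriv (lin d)"
    unfolding fps_deriv_mult by (simp del: fps_deriv_mult add: ring2)
  finally show ?thesis .
qed

lemma ring3: "L * (2 * G * (-(S*G)) * M + G^2 * M' - L') = - (2 * S * L * M) * G^2 + L * G^2 * M' - L * (L'::'a::comm_ring_1)"
  by (simp add: algebra_simps power2_eq_square)

lemma ring4: "- (- L' * M + L * M') * G^2 + L * G^2 * M' - L * L' = L' * (G^2 * M - (L::'a::comm_ring_1))"
  by (simp add: algebra_simps power2_eq_square)

lemma G_square:
  fixes a b c d :: complex
  defines "s \<equiv> (\<lambda>k::nat. (a ^ k + b ^ k + c ^ k - d ^ k) / 2)"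
  shows "Gf s ^ 2 * lin d = lin a * lin b * lin c"
proof -
  define L where "L = lin a * lin b * lin c"
  define M where "M = lin d"
  define G where "G = Gf s"
  define S where "S = Sf s"
  define K where "K = G^2 * M - L"
  have key: "2 * S * L * M = - fps_deriv L * M + L * fps_deriv M"
    unfolding S_def L_def M_def s_def by (rule key_id)
  have GD: "fps_deriv G = - (S * G)" unfolding G_def S_def by (rule G_deriv)
  have "fps_deriv K = 2 * G * fps_deriv G * M + G^2 * fps_deriv M - fps_deriv L"
    unfolding K_def by (simp add: power2_eq_square algebra_simps)
  then have "L * fps_deriv K = L * (2 * G * fps_deriv G * M + G^2 * fps_deriv M - fps_deriv L)"
    by simp
  also have "\<dots> = - (2 * S * L * M) * G^2 + L * G^2 * fps_deriv M - L * fps_deriv L"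
    unfolding GD by (rule ring3)
  also have "\<dots> = fps_deriv L * K"
    unfolding key K_def by (rule ring4)
  finally have LK: "L * fps_deriv K = fps_deriv L * K" .
  have L0: "L $ 0 = 1" by (simp add: L_def)
  have KD: "fps_deriv K = (inverse L * fps_deriv L) * K"
  proof -
    have "fps_deriv K = (inverse L * L) * fps_deriv K" using L0 by (simp add: inverse_mult_eq_1)
    also have "\<dots> = inverse L * (L * fps_deriv K)" by (simp add: mult.assoc)
    finally show ?thesis unfolding LK by (simp add: mult.assoc)
  qed
  have K0: "K $ 0 = 0" by (simp add: K_def L_def M_def G_def Gf_def Fn_def Fseq_def power2_eq_square)
  have "\<forall>j\<le>n. K $ j = 0" for n
  proof (induction n)
    case 0 then show ?case using K0 by simp
  next
    case (Suc n)
    have "of_nat (Suc n) * K $ Suc n = fps_deriv K $ n" by simp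
    also have "\<dots> = (\<Sum>i=0..n. (inverse L * fps_deriv L) $ i * K $ (n - i))"
      unfolding KD fps_mult_nth ..
    also have "\<dots> = 0" using Suc.IH by (intro sum.neutral) auto
    finally have "K $ Suc n = 0" by (simp del: of_nat_Suc)
    then show ?case using Suc.IH le_Suc_eq by auto
  qed
  then have "K = 0" by (intro fps_ext) auto
  then show ?thesis unfolding K_def G_def M_def L_def by simp
qed



lemma poly_eq_nz:
  fixes p q :: "complex poly"
  assumes "\<And>t. t \<noteq> 0 \<Longrightarrow> poly p t = poly q t"
  shows "p = q"
proof (rule ccontr)
  assume "p \<noteq> q"
  then have "p - q \<noteq> 0" by simp
  then have "finite {t. poly (p - q) t = 0}" by (rule poly_roots_finite)
  moreover have "UNIV - {0} \<subseteq> {t. poly (p - q) t = 0}" using assms by auto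
  ultimately have "finite (UNIV - {0::complex})" by (rule finite_subset[rotated])
  then show False by (simp add: infinite_UNIV_char_0)
qed

definition rv :: "nat \<Rightarrow> complex poly \<Rightarrow> complex poly" where
  "rv n p = (\<Sum>k\<le>n. monom (coeff p k) (n - k))"

lemma poly_le:
  fixes p :: "complex poly"
  assumes "degree p \<le> n" shows "poly p x = (\<Sum>i\<le>n. coeff p i * x ^ i)"
proof -
  have "poly p x = (\<Sum>i\<le>degree p. coeff p i * x ^ i)" by (rule poly_altdef)
  also have "\<dots> = (\<Sum>i\<le>n. coeff p i * x ^ i)"
    by (rule sum.mono_neutral_left) (use assms in \<open>auto simp: coeff_eq_0\<close>)
  finally show ?thesis .
qed

lemma poly_rv:
  assumes "degree p \<le> n" "z \<noteq> 0"
  shows "poly (rv n p) z = z ^ n * poly p (1 / z)"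
proof -
  have "poly (rv n p) z = (\<Sum>k\<le>n. coeff p k * z ^ (n - k))"
    by (simp add: rv_def poly_sum poly_monom)
  also have "\<dots> = (\<Sum>k\<le>n. z ^ n * (coeff p k * (1/z) ^ k))"
  proof (rule sum.cong)
    fix k assume "k \<in> {..n}"
    then have "z ^ n = z ^ (n - k) * z ^ k" by (simp add: power_add[symmetric])
    then show "coeff p k * z ^ (n - k) = z ^ n * (coeff p k * (1/z) ^ k)"
      using assms(2) by (simp add: power_one_over field_simps)
  qed simp
  also have "\<dots> = z ^ n * poly p (1/z)"
    by (simp add: poly_le[OF assms(1)] sum_distrib_left)
  finally show ?thesis .
qed

lemma coeff_rv: "coeff (rv n p) k = (if k \<le> n then coeff p (n - k) else 0)"
proof -
  have "coeff (rv n p) k = (\<Sum>j\<le>n. if n - j = k then coeff p j else 0)"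
    by (simp add: rv_def coeff_sum)
  also have "\<dots> = (if k \<le> n then coeff p (n - k) else 0)"
  proof (cases "k \<le> n")
    case True
    have "(\<Sum>j\<le>n. if n - j = k then coeff p j else 0) = (\<Sum>j\<in>{n-k}. if n - j = k then coeff p j else 0)"
      by (rule sum.mono_neutral_right) (use True in auto)
    then show ?thesis using True by simp
  next
    case False
    have "(\<Sum>j\<le>n. if n - j = k then coeff p j else 0) = 0"
      by (rule sum.neutral) (use False in auto)
    then show ?thesis using False by simp
  qed
  finally show ?thesis .
qed

lemma degree_lin_prod: "finite J \<Longrightarrow> degree (\<Prod>j\<in>J. [:1, - y j:] :: complex poly) \<le> card J"
proof -
  assume J: "finite J"
  have "degree (\<Prod>j\<in>J. [:1, - y j:] :: complex poly) \<le> (\<Sum>j\<in>J. degree [:1, - y j:])"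
    using degree_prod_sum_le[OF J, of "\<lambda>j. [:1, - y j:]"] by (simp add: o_def)
  also have "\<dots> \<le> (\<Sum>j\<in>J. 1)" by (intro sum_mono) simp
  finally show ?thesis by simp
qed

lemma poly_lin_prod:
  fixes t :: complex and y :: "nat \<Rightarrow> complex"
  assumes "t \<noteq> 0" "finite J"
  shows "poly (\<Prod>j\<in>J. [:1, - y j:]) t = t ^ card J * poly (\<Prod>j\<in>J. [:- y j, 1:]) (1/t)"
proof -
  have "poly (\<Prod>j\<in>J. [:1, - y j:]) t = (\<Prod>j\<in>J. t * (1/t - y j))"
    by (simp add: poly_prod algebra_simps assms(1))
  also have "\<dots> = t ^ card J * (\<Prod>j\<in>J. (1/t - y j))"
    by (simp add: prod.distrib)
  finally show ?thesis by (simp add: poly_prod)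
qed

lemma rv_lin_prod:
  "rv m (\<Prod>j\<in>{1..m}. [:1, - y j:]) = (\<Prod>j\<in>{1..m}. [:- y j, 1:])"
proof (rule poly_eq_nz)
  fix z :: complex assume z: "z \<noteq> 0"
  have "poly (rv m (\<Prod>j\<in>{1..m}. [:1, - y j:])) z = z ^ m * poly (\<Prod>j\<in>{1..m}. [:1, - y j:]) (1/z)"
    by (rule poly_rv) (use degree_lin_prod[of "{1..m}" y] z in auto)
  also have "\<dots> = poly (\<Prod>j\<in>{1..m}. [:- y j, 1:]) z"
    using poly_lin_prod[of "1/z" "{1..m}" y] z by (simp add: power_one_over field_simps)
  finally show "poly (rv m (\<Prod>j\<in>{1..m}. [:1, - y j:])) z = poly (\<Prod>j\<in>{1..m}. [:- y j, 1:]) z" .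
qed

lemma rv_mult:
  assumes "degree p \<le> n" "degree q \<le> k"
  shows "rv (n + k) (p * q) = rv n p * rv k q"
proof (rule poly_eq_nz)
  fix z :: complex assume z: "z \<noteq> 0"
  have dpq: "degree (p * q) \<le> n + k"
    using degree_mult_le[of p q] assms by simp
  show "poly (rv (n + k) (p * q)) z = poly (rv n p * rv k q) z"
    using z by (simp add: poly_rv[OF dpq z] poly_rv[OF assms(1) z] poly_rv[OF assms(2) z] power_add)
qed

lemma prod_lin_dvd:
  fixes R V :: "complex poly"
  assumes "finite J" "\<forall>j\<in>J. poly V (y j) \<noteq> 0"
    and "(\<Prod>j\<in>J. [:- y j, 1:]) dvd R * V"
  shows "(\<Prod>j\<in>J. [:- y j, 1:]) dvd R"
  using assms
proof (induction J arbitrary: R rule: finite_induct)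
  case empty then show ?case by simp
next
  case (insert j J)
  have h: "[:- y j, 1:] * (\<Prod>i\<in>J. [:- y i, 1:]) dvd R * V"
    using insert by simp
  then have "[:- y j, 1:] dvd R * V" using dvd_mult_left by blast
  then have "poly (R * V) (y j) = 0" by (simp only: poly_eq_0_iff_dvd)
  then have "poly R (y j) = 0" using insert.prems(1) by simp
  then obtain R' where R': "R = [:- y j, 1:] * R'" by (auto simp: poly_eq_0_iff_dvd)
  have "[:- y j, 1:] * (\<Prod>i\<in>J. [:- y i, 1:]) dvd [:- y j, 1:] * (R' * V)"
    using h unfolding R' by (simp only: mult.assoc)
  moreover have "[:- y j, 1:] \<noteq> 0" by simp
  ultimately have "(\<Prod>i\<in>J. [:- y i, 1:]) dvd R' * V"
    using dvd_mult_cancel_left by blast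
  moreover have "\<forall>j\<in>J. poly V (y j) \<noteq> 0" using insert.prems(1) by simp
  ultimately have "(\<Prod>i\<in>J. [:- y i, 1:]) dvd R'" using insert.IH by blast
  then have "[:- y j, 1:] * (\<Prod>i\<in>J. [:- y i, 1:]) dvd [:- y j, 1:] * R'"
    by (rule mult_dvd_mono[OF dvd_refl])
  moreover have "(\<Prod>i\<in>insert j J. [:- y i, 1:]) = [:- y j, 1:] * (\<Prod>i\<in>J. [:- y i, 1:])"
    using insert.hyps by (rule prod.insert)
  ultimately show ?case unfolding R' by simp
qed

lemma degree_prod_lin: "degree (\<Prod>j\<in>{1..m}. [:- y j, 1:] :: complex poly) = m"
proof -
  have "degree (\<Prod>j\<in>{1..m}. [:- y j, 1:] :: complex poly) = (\<Sum>j\<in>{1..m}. degree [:- y j, 1:])"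
    by (rule degree_prod_eq_sum_degree) auto
  then show ?thesis by simp
qed



lemma coeff_monom_sum: "coeff (\<Sum>k\<le>n. monom (f k) k) j = (if j \<le> n then f j else 0)"
proof -
  have "coeff (\<Sum>k\<le>n. monom (f k) k) j = (\<Sum>k\<le>n. if k = j then f k else 0)"
    by (simp add: coeff_sum)
  also have "\<dots> = (if j \<le> n then f j else 0)"
    by (simp add: sum.delta)
  finally show ?thesis .
qed

lemma lin_fps: "fps_of_poly [:1, - a:] = lin a"
proof (rule fps_ext)
  fix n show "fps_of_poly [:1, - a:] $ n = lin a $ n"
    by (cases n) (auto simp: coeff_pCons split: nat.split)
qed

lemma ring5: "A * ((t*a') * (t*b') * (tm*q)^2) + B * ((t*c') * (t*d') * (tm*p)^2)
   = (t^2 * tm^2) * (A * (a'*b'*q^2) + B * (c'*d'*p^2))" for t :: "'a::comm_ring_1"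
  by (simp add: algebra_simps power2_eq_square)

lemma ring6:
  fixes G :: "'a::comm_ring_1"
  assumes "G^2 * ld = la*lb*lc" and "A*(la*lb*q^2) + B*(lc*ld*p^2) = E"
  shows "ld*(A*(q*G)^2 + B*(lc*p)^2) = lc*E"
proof -
  have "ld*(A*(q*G)^2 + B*(lc*p)^2) = A*q^2*(G^2*ld) + lc*(B*(lc*ld*p^2))"
    by (simp add: algebra_simps power2_eq_square)
  also have "\<dots> = A*q^2*(la*lb*lc) + lc*(B*(lc*ld*p^2))" unfolding assms(1) ..
  also have "\<dots> = lc*(A*(la*lb*q^2) + B*(lc*ld*p^2))" by (simp add: algebra_simps)
  finally show ?thesis unfolding assms(2) .
qed

lemma ring7: "ld*(A*(qG)^2 + (-A)*(lcp)^2) = (A*ld*(qG+lcp)) * (qG - lcp)" for A :: "'a::comm_ring_1"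
  by (simp add: algebra_simps power2_eq_square)

theorem theorem2:
  fixes m n :: nat and a b c d :: complex and T U :: "complex poly"
    and x y :: "nat \<Rightarrow> complex"
  assumes hn: "n = 2 * m + 2"
    and hT: "degree T = n" and hU: "degree U \<le> n - 2"
    and hpell: "T ^ 2 - Hpoly a b c d * U ^ 2 = 1"
    and hx: "\<And>z. poly T z = 1 - 2 * (z - c) * (z - d) * (\<Prod>j=1..m. (z - x j) ^ 2)
               / ((a - c) * (a - d) * (\<Prod>j=1..m. (a - x j) ^ 2))"
    and hy: "\<And>z. poly T z = -1 + 2 * (z - a) * (z - b) * (\<Prod>j=1..m. (z - y j) ^ 2)
               / ((c - a) * (c - b) * (\<Prod>j=1..m. (c - y j) ^ 2))"
  defines "s \<equiv> (\<lambda>k::nat. (a ^ k + b ^ k + c ^ k - d ^ k) / 2)"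
  shows "det (FFmat s (m + 1) m) \<noteq> 0 \<and>
    smult (det (FFmat s (m + 1) m)) (monom 1 m)
      + (\<Sum>i=1..m. smult (det (FFimat s (m + 1) m i)) (monom 1 (m - i)))
    = smult (det (FFmat s (m + 1) m)) (\<Prod>j=1..m. [:- y j, 1:])"
proof -
  define P where "P = (\<Prod>j=1..m. [:- x j, 1:])"
  define Q where "Q = (\<Prod>j=1..m. [:- y j, 1:])"
  define Pr where "Pr = (\<Prod>j=1..m. [:1, - x j:])"
  define Qr where "Qr = (\<Prod>j=1..m. [:1, - y j:])"
  define Dx where "Dx = (a - c) * (a - d) * (\<Prod>j=1..m. (a - x j) ^ 2)"
  define Dy where "Dy = (c - a) * (c - b) * (\<Prod>j=1..m. (c - y j) ^ 2)"
  have polyP: "poly P z = (\<Prod>j=1..m. z - x j)" for z by (simp add: P_def poly_prod)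
  have polyQ: "poly Q z = (\<Prod>j=1..m. z - y j)" for z by (simp add: Q_def poly_prod)
  have hx': "poly T z = 1 - 2 * ((z - c) * (z - d) * (poly P z)^2) / Dx" for z
    using hx[of z] unfolding Dx_def polyP prod_power_distrib by (simp add: mult.assoc)
  have hy': "poly T z = -1 + 2 * ((z - a) * (z - b) * (poly Q z)^2) / Dy" for z
    using hy[of z] unfolding Dy_def polyQ prod_power_distrib by (simp add: mult.assoc)
  have Tnc: "T \<noteq> [:e:]" for e using hT hn by auto
  have Dx0: "Dx \<noteq> 0"
  proof
    assume "Dx = 0"
    then have "poly T = poly [:1:]" using hx' by (auto simp: fun_eq_iff)
    then show False using Tnc by (simp only: poly_eq_poly_eq_iff)
  qed
  have Dy0: "Dy \<noteq> 0"
  proof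
    assume "Dy = 0"
    then have "poly T = poly [:-1:]" using hy' by (auto simp: fun_eq_iff)
    then show False using Tnc by (simp only: poly_eq_poly_eq_iff)
  qed
  define \<alpha> where "\<alpha> = 2 / Dy"
  define \<beta> where "\<beta> = 2 / Dx"
  have al0: "\<alpha> \<noteq> 0" using Dy0 by (simp add: \<alpha>_def)
  have zid: "\<alpha> * ((z-a)*(z-b)*(poly Q z)^2) + \<beta> * ((z-c)*(z-d)*(poly P z)^2) = 2" for z
    using hx'[of z] hy'[of z] by (simp add: \<alpha>_def \<beta>_def)
  have degQr: "degree Qr \<le> m" unfolding Qr_def using degree_lin_prod[of "{1..m}" y] by simp
  have degPr: "degree Pr \<le> m" unfolding Pr_def using degree_lin_prod[of "{1..m}" x] by simp
  have tid: "smult \<alpha> ([:1,-a:]*[:1,-b:]*Qr^2) + smult \<beta> ([:1,-c:]*[:1,-d:]*Pr^2) = smult 2 (monom 1 n)"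
  proof (rule poly_eq_nz)
    fix t :: complex assume t: "t \<noteq> 0"
    have pQ: "poly Qr t = t^m * poly Q (1/t)"
      unfolding Qr_def Q_def using poly_lin_prod[OF t, of "{1..m}" y] by simp
    have pP: "poly Pr t = t^m * poly P (1/t)"
      unfolding Pr_def P_def using poly_lin_prod[OF t, of "{1..m}" x] by simp
    have l: "poly [:1, - e:] t = t * (1/t - e)" for e using t by (simp add: field_simps)
    have "poly (smult \<alpha> ([:1,-a:]*[:1,-b:]*Qr^2) + smult \<beta> ([:1,-c:]*[:1,-d:]*Pr^2)) t
       = \<alpha> * ((t*(1/t-a)) * (t*(1/t-b)) * (t^m * poly Q (1/t))^2) + \<beta> * ((t*(1/t-c)) * (t*(1/t-d)) * (t^m * poly P (1/t))^2)"
      by (simp only: poly_add poly_smult poly_mult poly_power l pQ pP)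
    also have "\<dots> = (t^2 * (t^m)^2) * 2"
      unfolding ring5 zid ..
    also have "\<dots> = poly (smult 2 (monom 1 n)) t"
      by (simp add: hn poly_monom power_add power_mult[symmetric] mult.commute power2_eq_square mult_2_right)
    finally show "poly (smult \<alpha> ([:1,-a:]*[:1,-b:]*Qr^2) + smult \<beta> ([:1,-c:]*[:1,-d:]*Pr^2)) t
       = poly (smult 2 (monom 1 n)) t" .
  qed
  define G where "G = Gf s"
  define q where "q = fps_of_poly Qr"
  define p where "p = fps_of_poly Pr"
  have fid: "fps_const \<alpha> * (lin a * lin b * q^2) + fps_const \<beta> * (lin c * lin d * p^2) = 2 * fps_X ^ n"
  proof -
    have "fps_of_poly (smult \<alpha> ([:1,-a:]*[:1,-b:]*Qr^2) + smult \<beta> ([:1,-c:]*[:1,-d:]*Pr^2))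
        = fps_of_poly (smult 2 (monom 1 n))" unfolding tid ..
    then show ?thesis
      by (simp add: fps_of_poly_add fps_of_poly_smult fps_of_poly_mult fps_of_poly_power
          lin_fps q_def p_def fps_of_poly_monom' numeral_fps_const)
  qed
  have G2: "G^2 * lin d = lin a * lin b * lin c" unfolding G_def s_def by (rule G_square)
  have eq1: "lin d * (fps_const \<alpha> * (q*G)^2 + fps_const \<beta> * (lin c * p)^2) = lin c * (2 * fps_X ^ n)"
    by (rule ring6[OF G2 fid])
  have q0: "q $ 0 = 1" unfolding q_def Qr_def by (simp add: poly_0_coeff_0[symmetric] poly_prod)
  have p0: "p $ 0 = 1" unfolding p_def Pr_def by (simp add: poly_0_coeff_0[symmetric] poly_prod)
  have G0: "G $ 0 = 1" by (simp add: G_def Gf_def Fn_def Fseq_def)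
  have ab: "\<beta> = - \<alpha>"
  proof -
    have "(lin d * (fps_const \<alpha> * (q*G)^2 + fps_const \<beta> * (lin c * p)^2)) $ 0 = (lin c * (2 * fps_X ^ n)) $ 0"
      unfolding eq1 ..
    then have "\<alpha> + \<beta> = 0" using q0 p0 G0 hn by (simp add: fps_nth_power_0)
    then show ?thesis by (simp add: eq_neg_iff_add_eq_0 add.commute)
  qed
  define E where "E = q*G - lin c * p"
  define U where "U = fps_const \<alpha> * lin d * (q*G + lin c * p)"
  have UE: "U * E = lin c * (2 * fps_X ^ n)"
  proof -
    have "U*E = lin d * (fps_const \<alpha> * (q*G)^2 + (- fps_const \<alpha>) * (lin c * p)^2)"
      unfolding U_def E_def by (rule ring7[symmetric])
    also have "\<dots> = lin c * (2 * fps_X ^ n)" using eq1 unfolding ab by simp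
    finally show ?thesis .
  qed
  have U0: "U $ 0 \<noteq> 0" using q0 p0 G0 al0 by (simp add: U_def)
  have Eform: "E = fps_X ^ n * (inverse U * (lin c * 2))"
  proof -
    have "E = (inverse U * U) * E" using U0 by (simp add: inverse_mult_eq_1)
    also have "\<dots> = inverse U * (lin c * (2 * fps_X ^ n))" by (simp add: mult.assoc UE)
    finally show ?thesis by (simp add: ac_simps)
  qed
  have Elow: "E $ k = 0" if "k < n" for k
    using that unfolding Eform fps_X_power_mult_nth by simp
  define V where "V = [:1, -c:] * Pr"
  have degV: "degree V \<le> m + 1"
  proof -
    have "degree V \<le> degree [:1, -c:] + degree Pr" unfolding V_def by (rule degree_mult_le)
    also have "\<dots> \<le> 1 + m" using degPr by (intro add_mono) auto
    finally show ?thesis by simp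
  qed
  have qGlow: "(q * G) $ k = coeff V k" if "k < n" for k
  proof -
    have "(q * G) $ k = (lin c * p) $ k" using Elow[OF that] by (simp add: E_def)
    also have "lin c * p = fps_of_poly V" by (simp add: V_def fps_of_poly_mult lin_fps p_def)
    finally show ?thesis by simp
  qed
  have Fsys: "(\<Sum>i=0..m. coeff Qr i * Fn s (m + 1 + r - i)) = 0" if r: "1 \<le> r" "r \<le> m" for r
  proof -
    have "(q * G) $ (m + 1 + r) = (\<Sum>i=0..m + 1 + r. coeff Qr i * Fn s (m + 1 + r - i))"
      by (simp add: fps_mult_nth q_def G_def Gf_def)
    also have "\<dots> = (\<Sum>i=0..m. coeff Qr i * Fn s (m + 1 + r - i))"
      by (rule sum.mono_neutral_right) (use degQr in \<open>auto simp: coeff_eq_0\<close>)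
    finally have "(\<Sum>i=0..m. coeff Qr i * Fn s (m + 1 + r - i)) = coeff V (m + 1 + r)"
      using qGlow[of "m + 1 + r"] r hn by simp
    also have "\<dots> = 0" using degV r by (simp add: coeff_eq_0)
    finally show ?thesis .
  qed
  have Qr0: "coeff Qr 0 = 1" using q0 by (simp add: q_def)

  define FF where "FF = FFmat s (m+1) m"
  have FFc: "FF \<in> carrier_mat m m" by (simp add: FF_def FFmat_def)
  have FFent: "FF $$ (r,c) = Fn s (m + 1 + r - c)" if "r < m" "c < m" for r c
  proof -
    have "int (m + 1) + int r - int c = int (m + 1 + r - c)" using that by simp
    then show ?thesis using that by (simp add: FF_def FFmat_def Fn_def add.assoc)
  qed
  have coeffpf: "coeff (p1 * p2) k = (\<Sum>i=0..k. coeff p1 i * coeff p2 (k - i))" for p1 p2 :: "complex poly" and k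
  proof -
    have "coeff (p1 * p2) k = (fps_of_poly p1 * fps_of_poly p2) $ k" by (simp add: fps_of_poly_mult[symmetric])
    then show ?thesis by (simp add: fps_mult_nth)
  qed
  define xv where "xv = vec m (\<lambda>c. coeff Qr (c+1))"
  have xvc: "xv \<in> carrier_vec m" by (simp add: xv_def)
  have FFx: "FF *\<^sub>v xv = vec m (\<lambda>r. - Fseq s (int (m+1) + int r + 1))"
  proof (rule eq_vecI)
    fix r assume "r < dim_vec (vec m (\<lambda>r. - Fseq s (int (m+1) + int r + 1)))"
    then have r: "r < m" by simp
    have "vec_index (FF *\<^sub>v xv) r = (\<Sum>c\<in>{0..<m}. FF $$ (r,c) * coeff Qr (c+1))"
      using r FFc by (simp add: scalar_prod_def xv_def)
    also have "\<dots> = (\<Sum>c\<in>{0..<m}. coeff Qr (c+1) * Fn s (m + 1 + (r + 1) - (c + 1)))"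
      using FFent r by (intro sum.cong) auto
    also have "\<dots> = (\<Sum>i=1..m. coeff Qr i * Fn s (m + 1 + (r + 1) - i))"
      by (rule sum.reindex_bij_witness[of _ "\<lambda>i. i - 1" "\<lambda>c. c + 1"]) auto
    also have "\<dots> = - Fn s (m + 1 + (r + 1))"
    proof -
      have "(\<Sum>i=0..m. coeff Qr i * Fn s (m + 1 + (r + 1) - i))
          = coeff Qr 0 * Fn s (m + 1 + (r + 1) - 0) + (\<Sum>i=Suc 0..m. coeff Qr i * Fn s (m + 1 + (r + 1) - i))"
        by (rule sum.atLeast_Suc_atMost) simp
      then show ?thesis using Fsys[of "r + 1"] r Qr0 by (simp add: eq_neg_iff_add_eq_0 add.commute)
    qed
    also have "\<dots> = vec_index (vec m (\<lambda>r. - Fseq s (int (m+1) + int r + 1))) r"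
      using r by (simp add: Fn_def add.assoc)
    finally show "vec_index (FF *\<^sub>v xv) r = vec_index (vec m (\<lambda>r. - Fseq s (int (m+1) + int r + 1))) r" .
  qed (simp add: FF_def FFmat_def)
  have detFi: "det (FFimat s (m+1) m i) = coeff Qr i * det FF" if i: "1 \<le> i" "i \<le> m" for i
  proof -
    have "FFimat s (m+1) m i = replace_col FF (FF *\<^sub>v xv) (i - 1)"
      unfolding FFx using i
      by (intro eq_matI) (auto simp: FFimat_def replace_col_def FF_def FFmat_def)
    moreover have "det (replace_col FF (FF *\<^sub>v xv) (i - 1)) = vec_index xv (i - 1) * det FF"
      by (rule cramer_lemma_mat[OF FFc xvc]) (use i in simp)
    ultimately show ?thesis using i by (simp add: xv_def)
  qed
  have nz: "\<forall>j\<in>{1..m}. poly ([:-c,1:] * P) (y j) \<noteq> 0"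
  proof
    fix j assume j: "j \<in> {1..m}"
    have "poly Q (y j) = 0" unfolding polyQ using j by (auto simp: prod_zero_iff)
    then have m1: "poly T (y j) = -1" using hy'[of "y j"] by simp
    show "poly ([:-c,1:] * P) (y j) \<noteq> 0"
    proof
      assume "poly ([:-c,1:] * P) (y j) = 0"
      then have "(y j - c) * poly P (y j) = 0" by (simp add: algebra_simps)
      then have "(y j - c) * (y j - d) * (poly P (y j))^2 = 0" by (auto simp: power2_eq_square)
      then have "poly T (y j) = 1" using hx'[of "y j"] by simp
      then show False using m1 by simp
    qed
  qed
  have detFF: "det FF \<noteq> 0"
  proof
    assume "det FF = 0"
    then obtain v where v: "v \<in> carrier_vec m" "v \<noteq> 0\<^sub>v m" "FF *\<^sub>v v = 0\<^sub>v m"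
      using det_0_iff_vec_prod_zero[OF FFc] by auto
    define R where "R = (\<Sum>k\<le>m. monom (if 1 \<le> k then vec_index v (k - 1) else 0) k)"
    have coeffR: "coeff R k = (if k \<le> m \<and> 1 \<le> k then vec_index v (k - 1) else 0)" for k
      by (simp add: R_def coeff_monom_sum)
    have degR: "degree R \<le> m" by (rule degree_le) (simp add: coeffR)
    define Z where "Z = fps_of_poly R * G"
    have Zmid: "Z $ k = 0" if k: "m + 2 \<le> k" "k < n" for k
    proof -
      define r where "r = k - (m + 2)"
      have r: "k = m + 2 + r" "r < m" using k hn by (auto simp: r_def)
      have "Z $ k = (\<Sum>i=0..k. coeff R i * Fn s (k - i))"
        by (simp add: Z_def fps_mult_nth G_def Gf_def)
      also have "\<dots> = (\<Sum>i=1..m. coeff R i * Fn s (k - i))"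
        by (rule sum.mono_neutral_right) (use r in \<open>auto simp: coeffR\<close>)
      also have "\<dots> = (\<Sum>c\<in>{0..<m}. FF $$ (r,c) * vec_index v c)"
        by (rule sum.reindex_bij_witness[of _ "\<lambda>c. c + 1" "\<lambda>i. i - 1"])
           (use r in \<open>auto simp: coeffR FFent\<close>)
      also have "\<dots> = vec_index (FF *\<^sub>v v) r"
        using r FFc carrier_vecD[OF v(1)] by (simp add: scalar_prod_def)
      also have "\<dots> = 0" using v r by simp
      finally show ?thesis .
    qed
    define W where "W = (\<Sum>k\<le>m+1. monom (Z $ k) k)"
    have coeffW: "coeff W k = (if k \<le> m+1 then Z $ k else 0)" for k
      by (simp add: W_def coeff_monom_sum)
    have degW: "degree W \<le> m + 1" by (rule degree_le) (simp add: coeffW)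
    have ZW: "Z $ k = coeff W k" if "k < n" for k using Zmid[of k] that coeffW by auto
    have RV: "R * V = Qr * W"
    proof (rule poly_eqI)
      fix k
      show "coeff (R * V) k = coeff (Qr * W) k"
      proof (cases "k < n")
        case False
        have "degree (R * V) < k" using degree_mult_le[of R V] degR degV False hn by linarith
        moreover have "degree (Qr * W) < k" using degree_mult_le[of Qr W] degQr degW False hn by linarith
        ultimately show ?thesis by (simp add: coeff_eq_0)
      next
        case True
        have "coeff (R * V) k = (\<Sum>i=0..k. coeff R i * coeff V (k - i))" by (rule coeffpf)
        also have "\<dots> = (\<Sum>i=0..k. coeff R i * (q * G) $ (k - i))"
          using qGlow True by (intro sum.cong) auto
        also have "\<dots> = (fps_of_poly R * (q * G)) $ k" by (simp add: fps_mult_nth)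
        also have "fps_of_poly R * (q * G) = q * Z" by (simp add: Z_def ac_simps)
        also have "(q * Z) $ k = (\<Sum>i=0..k. coeff Qr i * coeff W (k - i))"
          unfolding fps_mult_nth using ZW True by (intro sum.cong) (auto simp: q_def)
        also have "\<dots> = coeff (Qr * W) k" by (rule coeffpf[symmetric])
        finally show ?thesis .
      qed
    qed
    have rv1: "rv 1 [:1, -c:] = [:-c, 1:]"
      by (rule poly_eqI) (auto simp: coeff_rv coeff_pCons split: nat.split)
    have rvV: "rv (m + 1) V = [:-c, 1:] * P"
    proof -
      have "rv (1 + m) V = rv 1 [:1, -c:] * rv m Pr"
        unfolding V_def by (rule rv_mult) (use degPr in auto)
      then show ?thesis unfolding rv1 Pr_def P_def rv_lin_prod by (simp add: add.commute)
    qed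
    have "rv m R * ([:-c, 1:] * P) = rv (m + (m + 1)) (R * V)"
      unfolding rv_mult[OF degR degV] rvV ..
    also have "\<dots> = rv m Qr * rv (m + 1) W" unfolding RV by (rule rv_mult[OF degQr degW])
    also have "rv m Qr = Q" unfolding Qr_def Q_def by (rule rv_lin_prod)
    finally have "Q dvd rv m R * ([:-c, 1:] * P)" by (metis dvd_triv_left)
    then have Qdvd: "Q dvd rv m R" unfolding Q_def by (rule prod_lin_dvd[rotated 2]) (use nz in auto)
    have rvR0: "rv m R = 0"
    proof (rule ccontr)
      assume ne: "rv m R \<noteq> 0"
      have "m \<le> degree (rv m R)"
        using dvd_imp_degree_le[OF Qdvd ne] degree_prod_lin[where m=m and y=y] by (simp add: Q_def)
      moreover have "coeff (rv m R) k = 0" if "m \<le> k" for k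
        using that by (auto simp: coeff_rv coeffR)
      ultimately have "coeff (rv m R) (degree (rv m R)) = 0" by blast
      then show False using leading_coeff_neq_0[OF ne] by simp
    qed
    have "v = 0\<^sub>v m"
    proof (rule eq_vecI)
      fix c assume "c < dim_vec (0\<^sub>v m)"
      then have c: "c < m" by simp
      have "vec_index v c = coeff R (c + 1)" using c by (simp add: coeffR)
      also have "\<dots> = coeff (rv m R) (m - (c + 1))" using c by (simp add: coeff_rv)
      also have "\<dots> = 0" by (simp add: rvR0)
      finally show "vec_index v c = vec_index (0\<^sub>v m) c" using c by simp
    qed (use v in auto)
    then show False using v(2) by simp
  qed
  have Qrv: "Q = (\<Sum>k\<le>m. monom (coeff Qr k) (m - k))"
    using rv_lin_prod[where m=m and y=y] unfolding Q_def Qr_def rv_def by simp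
  have "smult (det FF) Q = smult (det FF) (monom 1 m)
      + (\<Sum>i=1..m. smult (det (FFimat s (m + 1) m i)) (monom 1 (m - i)))"
  proof -
    have sm: "smult (det FF) pp = [:det FF:] * pp" for pp by simp
    have "smult (det FF) Q = (\<Sum>k\<le>m. monom (det FF * coeff Qr k) (m - k))"
      unfolding Qrv sm sum_distrib_left by (simp add: sm[symmetric] smult_monom)
    also have "{..m} = insert 0 {1..m}" by auto
    also have "(\<Sum>k\<in>insert 0 {1..m}. monom (det FF * coeff Qr k) (m - k))
        = monom (det FF * coeff Qr 0) (m - 0) + (\<Sum>k\<in>{1..m}. monom (det FF * coeff Qr k) (m - k))"
      by (rule sum.insert) auto
    also have "(\<Sum>k\<in>{1..m}. monom (det FF * coeff Qr k) (m - k))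
        = (\<Sum>i=1..m. smult (det (FFimat s (m + 1) m i)) (monom 1 (m - i)))"
    proof (rule sum.cong)
      fix k assume "k \<in> {1..m}"
      then have "det (FFimat s (m + 1) m k) = coeff Qr k * det FF" by (intro detFi) auto
      then show "monom (det FF * coeff Qr k) (m - k) = smult (det (FFimat s (m + 1) m k)) (monom 1 (m - k))"
        by (simp add: smult_monom mult.commute)
    qed simp
    finally show ?thesis using Qr0 by (simp add: smult_monom)
  qed
  then show ?thesis using detFF unfolding FF_def Q_def by simp
qed


end
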